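(* Let $\omega_1,\dots,\omega_4$ be a basis of $(\mathbb C^4)^\ast$ and set $\Omega_1=\omega_1\wedge\omega_2$, $\Omega_2=\omega_1\wedge\omega_3$, $\Omega_3=\omega_1\wedge\omega_4$, $\Omega_4=\omega_2\wedge\omega_3$, $\Omega_5=-\omega_2\wedge\omega_4$, $\Omega_6=\omega_3\wedge\omega_4$. For $a\in\mathbb C$ the $(2,2)$-form $$\alpha_a=\sum_{j=1}^6\Omega_j\wedge\bar\Omega_j+a\,\Omega_1\wedge\bar\Omega_6+\bar a\,\Omega_6\wedge\bar\Omega_1$$ is positive if and only if $|a|\leq 2$.
   Context: Forms are constant-coefficient forms on $\mathbb C^n$. A $(p,p)$-form $\alpha$ in $\mathbb C^n$ is called positive if for all $(1,0)$-forms $\gamma_1,\dots,\gamma_{n-p}\in(\mathbb C^n)^\ast$ one has $\alpha\wedge i\gamma_1\wedge\bar\gamma_1\wedge\dots\wedge i\gamma_{n-p}\wedge\bar\gamma_{n-p}\geq 0$, meaning this $(n,n)$-form is a nonnegative real multiple of the standard volume form $idz_1\wedge d\bar z_1\wedge\dots\wedge idz_n\wedge d\bar z_n$. *)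

theory Defs
  imports Complex_Main
begin

text \<open>Constant-coefficient differential forms on C^n, represented in the exterior
algebra generated by the 2n symbols dz_0,...,dz_(n-1) (encoded as the naturals 0..n-1)
and dzbar_0,...,dzbar_(n-1) (encoded as n..2n-1).  A form is given by its coefficient
function on finite sets S of generators: the basis element e_S is the wedge product of
the generators in S in increasing order.\<close>

type_synonym form = "nat set \<Rightarrow> complex"

definition inv_count :: "nat set \<Rightarrow> nat set \<Rightarrow> nat" where
  "inv_count A B = card {(a, b). a \<in> A \<and> b \<in> B \<and> b < a}"

definition wedge :: "form \<Rightarrow> form \<Rightarrow> form" where
  "wedge \<alpha> \<beta> = (\<lambda>S. if finite S then
      (\<Sum>A\<in>Pow S. (-1) ^ inv_count A (S - A) * \<alpha> A * \<beta> (S - A)) else 0)"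

definition fadd :: "form \<Rightarrow> form \<Rightarrow> form" where
  "fadd \<alpha> \<beta> = (\<lambda>S. \<alpha> S + \<beta> S)"

definition fscale :: "complex \<Rightarrow> form \<Rightarrow> form" where
  "fscale c \<alpha> = (\<lambda>S. c * \<alpha> S)"

definition unit_form :: form where
  "unit_form = (\<lambda>S. if S = {} then 1 else 0)"

text \<open>The (1,0)-form sum_k c_k dz_k, and its complex conjugate sum_k conj(c_k) dzbar_k.\<close>
definition form10 :: "nat \<Rightarrow> (nat \<Rightarrow> complex) \<Rightarrow> form" where
  "form10 n c = (\<lambda>S. if card S = 1 \<and> the_elem S < n then c (the_elem S) else 0)"

definition form01 :: "nat \<Rightarrow> (nat \<Rightarrow> complex) \<Rightarrow> form" where
  "form01 n c = (\<lambda>S. if card S = 1 \<and> n \<le> the_elem S \<and> the_elem S < 2 * n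
                     then cnj (c (the_elem S - n)) else 0)"

definition dz :: "nat \<Rightarrow> nat \<Rightarrow> form" where
  "dz n k = form10 n (\<lambda>j. if j = k then 1 else 0)"

definition dzb :: "nat \<Rightarrow> nat \<Rightarrow> form" where
  "dzb n k = form01 n (\<lambda>j. if j = k then 1 else 0)"

definition vol :: "nat \<Rightarrow> form" where
  "vol n = foldr (\<lambda>k acc. wedge (fscale \<i> (wedge (dz n k) (dzb n k))) acc) [0..<n] unit_form"

definition test_form :: "nat \<Rightarrow> (nat \<Rightarrow> complex) list \<Rightarrow> form" where
  "test_form n gs = foldr (\<lambda>c acc. wedge (fscale \<i> (wedge (form10 n c) (form01 n c))) acc) gs unit_form"

definition positive_form :: "nat \<Rightarrow> nat \<Rightarrow> form \<Rightarrow> bool" where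
  "positive_form n p \<alpha> \<longleftrightarrow>
     (\<forall>gs. length gs = n - p \<longrightarrow>
        (\<exists>r::real. r \<ge> 0 \<and> wedge \<alpha> (test_form n gs) = fscale (complex_of_real r) (vol n)))"

text \<open>omega_0..omega_3 given by coefficient rows w j (omega_j = sum_k w j k dz_k).
  Omega / OmegaB j for j = 1..6 as in the paper (with omega indices shifted by one).\<close>
definition Omega :: "(nat \<Rightarrow> nat \<Rightarrow> complex) \<Rightarrow> nat \<Rightarrow> form" where
  "Omega w j = (let om = (\<lambda>i. form10 4 (w i)) in
     if j = 1 then wedge (om 0) (om 1)
     else if j = 2 then wedge (om 0) (om 2)
     else if j = 3 then wedge (om 0) (om 3)
     else if j = 4 then wedge (om 1) (om 2)
     else if j = 5 then fscale (-1) (wedge (om 1) (om 3))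
     else wedge (om 2) (om 3))"

definition OmegaB :: "(nat \<Rightarrow> nat \<Rightarrow> complex) \<Rightarrow> nat \<Rightarrow> form" where
  "OmegaB w j = (let om = (\<lambda>i. form01 4 (w i)) in
     if j = 1 then wedge (om 0) (om 1)
     else if j = 2 then wedge (om 0) (om 2)
     else if j = 3 then wedge (om 0) (om 3)
     else if j = 4 then wedge (om 1) (om 2)
     else if j = 5 then fscale (-1) (wedge (om 1) (om 3))
     else wedge (om 2) (om 3))"

definition alpha_form :: "(nat \<Rightarrow> nat \<Rightarrow> complex) \<Rightarrow> complex \<Rightarrow> form" where
  "alpha_form w a =
     fadd (fadd (foldr (\<lambda>j acc. fadd (wedge (Omega w j) (OmegaB w j)) acc) [1..<7] (\<lambda>_. 0))
                (fscale a (wedge (Omega w 1) (OmegaB w 6))))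
          (fscale (cnj a) (wedge (Omega w 6) (OmegaB w 1)))"

end

theory Submission
  imports Defs
begin


definition supp :: "form \<Rightarrow> nat set \<Rightarrow> nat \<Rightarrow> bool" where
  "supp \<phi> X k \<longleftrightarrow> (\<forall>S. \<phi> S \<noteq> 0 \<longrightarrow> finite S \<and> S \<subseteq> X \<and> card S = k)"

lemma inv_sum: "finite A \<Longrightarrow> finite B \<Longrightarrow>
  inv_count A B = (\<Sum>a\<in>A. \<Sum>b\<in>B. if b < a then 1 else 0)"
proof -
  assume f: "finite A" "finite B"
  have "{(a, b). a \<in> A \<and> b \<in> B \<and> b < a} = Sigma A (\<lambda>a. {b\<in>B. b < a})" by auto
  hence "inv_count A B = (\<Sum>a\<in>A. card {b\<in>B. b < a})"
    unfolding inv_count_def using f by (simp add: card_SigmaI)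
  also have "\<dots> = (\<Sum>a\<in>A. \<Sum>b\<in>B. if b < a then 1 else 0)"
    using f apply (simp add: sum.If_cases)
    by (intro sum.cong refl arg_cong[where f=card]) auto
  finally show ?thesis .
qed

lemma inv_union_left: "finite A \<Longrightarrow> finite B \<Longrightarrow> finite C \<Longrightarrow> A \<inter> B = {} \<Longrightarrow>
  inv_count (A \<union> B) C = inv_count A C + inv_count B C"
  by (simp add: inv_sum sum.union_disjoint)

lemma inv_union_right: "finite A \<Longrightarrow> finite B \<Longrightarrow> finite C \<Longrightarrow> B \<inter> C = {} \<Longrightarrow>
  inv_count A (B \<union> C) = inv_count A B + inv_count A C"
  by (simp add: inv_sum sum.union_disjoint sum.distrib)

lemma inv_swap: "finite A \<Longrightarrow> finite B \<Longrightarrow> A \<inter> B = {} \<Longrightarrow>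
  inv_count A B + inv_count B A = card A * card B"
proof -
  assume f: "finite A" "finite B" "A \<inter> B = {}"
  have "inv_count A B + inv_count B A = (\<Sum>a\<in>A. \<Sum>b\<in>B. (if b < a then 1 else 0) + (if a < b then 1 else 0))"
  proof -
    have "inv_count B A = (\<Sum>a\<in>A. \<Sum>b\<in>B. (if a < b then 1 else 0))"
      using f by (simp add: inv_sum) (rule sum.swap)
    thus ?thesis using f by (simp add: inv_sum sum.distrib)
  qed
  also have "\<dots> = (\<Sum>a\<in>A. \<Sum>b\<in>B. 1)"
    using f(3) by (intro sum.cong refl) auto
  finally show ?thesis by simp
qed





lemma wedge_fadd_left: "wedge (fadd a b) c = fadd (wedge a c) (wedge b c)"
  unfolding wedge_def fadd_def by (rule ext) (simp add: algebra_simps sum.distrib)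

lemma wedge_fscale_left: "wedge (fscale k a) c = fscale k (wedge a c)"
  unfolding wedge_def fscale_def by (rule ext) (simp add: algebra_simps sum_distrib_left)

lemma wedge_fscale_right: "wedge a (fscale k c) = fscale k (wedge a c)"
  unfolding wedge_def fscale_def by (rule ext) (simp add: algebra_simps sum_distrib_left)

lemma wedge_zero_left: "wedge (\<lambda>_. 0) c = (\<lambda>_. 0)"
  unfolding wedge_def by (rule ext) simp

lemma fscale_fscale: "fscale a (fscale b c) = fscale (a * b) c"
  unfolding fscale_def by (rule ext) simp

lemma fscale_one: "fscale 1 c = c"
  unfolding fscale_def by (rule ext) simp

lemma wedge_unit_right: "(\<And>S. infinite S \<Longrightarrow> a S = 0) \<Longrightarrow> wedge a unit_form = a"
proof (rule ext)
  fix S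
  assume inf: "\<And>S. infinite S \<Longrightarrow> a S = 0"
  show "wedge a unit_form S = a S"
  proof (cases "finite S")
    case True
    have "(\<Sum>A\<in>Pow S. (-1) ^ inv_count A (S - A) * a A * (if S - A = {} then 1 else 0))
       = (\<Sum>A\<in>Pow S. if A = S then (-1) ^ inv_count A (S - A) * a A else 0)"
      by (rule sum.cong) auto
    hence "wedge a unit_form S = (\<Sum>A\<in>Pow S. if A = S then (-1) ^ inv_count A (S - A) * a A else 0)"
      unfolding wedge_def unit_form_def using True by simp
    also have "\<dots> = (-1) ^ inv_count S {} * a S" using True by (simp add: sum.delta')
    also have "inv_count S {} = 0" by (simp add: inv_count_def)
    finally show ?thesis by simp
  next
    case False
    then show ?thesis using inf by (simp add: wedge_def)
  qed
qed

lemma wedge_infinite: "infinite S \<Longrightarrow> wedge a b S = 0"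
  by (simp add: wedge_def)


lemma supp_wedge:
  assumes "supp a X k" "supp b X l" shows "supp (wedge a b) X (k + l)"
  unfolding supp_def
proof (intro allI impI)
  fix S assume nz: "wedge a b S \<noteq> 0"
  hence fin: "finite S" by (metis wedge_infinite)
  hence "(\<Sum>A\<in>Pow S. (-1) ^ inv_count A (S - A) * a A * b (S - A)) \<noteq> 0"
    using nz by (simp add: wedge_def)
  then obtain A where A: "A \<in> Pow S" "(-1) ^ inv_count A (S - A) * a A * b (S - A) \<noteq> 0"
    by (rule sum.not_neutral_contains_not_neutral)
  hence "a A \<noteq> 0" "b (S - A) \<noteq> 0" by auto
  hence "A \<subseteq> X" "card A = k" "S - A \<subseteq> X" "card (S - A) = l"
    using assms unfolding supp_def by blast+
  moreover have "card S = card A + card (S - A)"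
    using A(1) fin by (simp add: card_Diff_subset finite_subset card_mono)
  ultimately show "finite S \<and> S \<subseteq> X \<and> card S = k + l" using fin A(1) by auto
qed

lemma supp_mono: "supp a X k \<Longrightarrow> X \<subseteq> Y \<Longrightarrow> supp a Y k"
  unfolding supp_def by blast

lemma supp_fscale: "supp a X k \<Longrightarrow> supp (fscale c a) X k"
  unfolding supp_def fscale_def by auto

lemma supp_fadd: "supp a X k \<Longrightarrow> supp b X k \<Longrightarrow> supp (fadd a b) X k"
  unfolding supp_def fadd_def by (metis add_0 add.right_neutral)

lemma supp_zero: "supp (\<lambda>_. 0) X k"
  unfolding supp_def by auto

lemma supp_unit: "supp unit_form X 0"
  unfolding supp_def unit_form_def by auto

lemma supp_form10: "supp (form10 4 c) {..<4} 1"
  unfolding supp_def form10_def by (auto simp: card_Suc_eq)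

lemma supp_form01: "supp (form01 4 c) {4..<8} 1"
  unfolding supp_def form01_def by (auto simp: card_Suc_eq)

lemma supp_top: "supp a X k \<Longrightarrow> finite X \<Longrightarrow> card X = k \<Longrightarrow> a S \<noteq> 0 \<Longrightarrow> S = X"
  unfolding supp_def by (metis card_subset_eq)

lemma supp_inf: "supp a X k \<Longrightarrow> infinite S \<Longrightarrow> a S = 0"
  unfolding supp_def by blast

lemma wedge_single:
  assumes "\<And>S. a S \<noteq> 0 \<Longrightarrow> S = A" "\<And>S. b S \<noteq> 0 \<Longrightarrow> S = B"
    "finite A" "finite B" "A \<inter> B = {}"
  shows "wedge a b (A \<union> B) = (-1) ^ inv_count A B * a A * b B"
proof -
  have "wedge a b (A \<union> B) = (\<Sum>C\<in>Pow (A \<union> B). (-1) ^ inv_count C (A \<union> B - C) * a C * b (A \<union> B - C))"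
    using assms by (simp add: wedge_def)
  also have "\<dots> = (\<Sum>C\<in>Pow (A \<union> B). if C = A then (-1) ^ inv_count C (A \<union> B - C) * a C * b (A \<union> B - C) else 0)"
    by (rule sum.cong) (use assms(1) in auto)
  also have "\<dots> = (-1) ^ inv_count A (A \<union> B - A) * a A * b (A \<union> B - A)"
    using assms by (simp add: sum.delta')
  also have "A \<union> B - A = B" using assms(5) by auto
  finally show ?thesis .
qed

lemma neg1_pow: "x + y = n \<Longrightarrow> (-1::complex) ^ x = (-1) ^ n * (-1) ^ y"
proof -
  assume h: "x + y = n"
  have "(-1::complex) ^ n * (-1) ^ y = (-1) ^ (x + 2 * y)"
    unfolding h[symmetric] by (simp add: power_add mult_2)
  also have "\<dots> = (-1) ^ x" by (simp add: power_add power_mult)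
  finally show ?thesis by simp
qed

lemma wedge_comm:
  assumes "supp a UNIV k" "supp b UNIV l"
  shows "wedge a b = fscale ((-1) ^ (k * l)) (wedge b a)"
proof (rule ext)
  fix S
  show "wedge a b S = fscale ((-1) ^ (k * l)) (wedge b a) S"
  proof (cases "finite S")
    case False thus ?thesis by (simp add: wedge_def fscale_def)
  next
    case fin: True
    have bij: "bij_betw (\<lambda>B. S - B) (Pow S) (Pow S)"
      by (rule bij_betw_byWitness[where f'="\<lambda>B. S - B"]) auto
    have "wedge a b S = (\<Sum>A\<in>Pow S. (-1) ^ inv_count A (S - A) * a A * b (S - A))"
      using fin by (simp add: wedge_def)
    also have "\<dots> = (\<Sum>B\<in>Pow S. (-1) ^ inv_count (S - B) (S - (S - B)) * a (S - B) * b (S - (S - B)))"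
      by (rule sum.reindex_bij_betw[OF bij, symmetric])
    also have "\<dots> = (\<Sum>B\<in>Pow S. (-1) ^ (k * l) * ((-1) ^ inv_count B (S - B) * b B * a (S - B)))"
    proof (rule sum.cong[OF refl])
      fix B assume B: "B \<in> Pow S"
      hence e: "S - (S - B) = B" by auto
      show "(-1) ^ inv_count (S - B) (S - (S - B)) * a (S - B) * b (S - (S - B)) =
            (-1) ^ (k * l) * ((-1) ^ inv_count B (S - B) * b B * a (S - B))"
      proof (cases "a (S - B) = 0 \<or> b B = 0")
        case True thus ?thesis using e by auto
      next
        case False
        hence "card (S - B) = k" "card B = l" using assms unfolding supp_def by auto
        moreover have "inv_count (S - B) B + inv_count B (S - B) = card (S - B) * card B"
          using B fin by (intro inv_swap) (auto intro: finite_subset)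
        ultimately have "(-1::complex) ^ inv_count (S - B) B = (-1) ^ (k * l) * (-1) ^ inv_count B (S - B)"
          by (intro neg1_pow) simp
        thus ?thesis using e by simp
      qed
    qed
    also have "\<dots> = fscale ((-1) ^ (k * l)) (wedge b a) S"
      using fin by (simp add: wedge_def fscale_def sum_distrib_left)
    finally show ?thesis .
  qed
qed


lemma wedge_assoc: "wedge (wedge a b) c = wedge a (wedge b c)"
proof (rule ext)
  fix S
  show "wedge (wedge a b) c S = wedge a (wedge b c) S"
  proof (cases "finite S")
    case False thus ?thesis by (simp add: wedge_def)
  next
    case fin: True
    define T1 where "T1 = (\<lambda>(A, B). (-1::complex) ^ inv_count A (S - A) * (-1) ^ inv_count B (A - B)
         * a B * b (A - B) * c (S - A))"
    define T2 where "T2 = (\<lambda>(B, C). (-1::complex) ^ inv_count B (S - B) * (-1) ^ inv_count C (S - B - C)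
         * a B * b C * c (S - B - C))"
    have "wedge (wedge a b) c S = (\<Sum>A\<in>Pow S. \<Sum>B\<in>Pow A. T1 (A, B))"
      unfolding wedge_def T1_def using fin
      by (auto simp: sum_distrib_left sum_distrib_right algebra_simps intro!: sum.cong
           dest: finite_subset)
    also have "\<dots> = sum T1 (SIGMA A:Pow S. Pow A)"
      using sum.Sigma[of "Pow S" Pow "\<lambda>A B. T1 (A, B)"] fin by (auto intro: finite_subset)
    also have "\<dots> = sum T2 (SIGMA B:Pow S. Pow (S - B))"
    proof (rule sum.reindex_bij_witness[where i="\<lambda>(B, C). (B \<union> C, B)" and j="\<lambda>(A, B). (B, A - B)"])
      fix p assume "p \<in> (SIGMA A:Pow S. Pow A)"
      then obtain A B where p: "p = (A, B)" "A \<subseteq> S" "B \<subseteq> A" by auto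
      show "(case case p of (A, B) \<Rightarrow> (B, A - B) of (B, C) \<Rightarrow> (B \<union> C, B)) = p"
        using p by auto
      show "(case p of (A, B) \<Rightarrow> (B, A - B)) \<in> (SIGMA B:Pow S. Pow (S - B))"
        using p by auto
      have fA: "finite A" "finite B" "finite (A - B)" "finite (S - A)"
        using p fin by (auto intro: finite_subset)
      have e1: "S - B - (A - B) = S - A" using p by auto
      have i1: "inv_count A (S - A) = inv_count B (S - A) + inv_count (A - B) (S - A)"
      proof -
        have "A = B \<union> (A - B)" using p by auto
        hence "inv_count A (S - A) = inv_count (B \<union> (A - B)) (S - A)" by simp
        also have "\<dots> = inv_count B (S - A) + inv_count (A - B) (S - A)"
          by (rule inv_union_left) (use fA in auto)
        finally show ?thesis .
      qed
      have i2: "inv_count B (S - B) = inv_count B (A - B) + inv_count B (S - A)"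
      proof -
        have "S - B = (A - B) \<union> (S - A)" using p by auto
        hence "inv_count B (S - B) = inv_count B ((A - B) \<union> (S - A))" by simp
        also have "\<dots> = inv_count B (A - B) + inv_count B (S - A)"
          by (rule inv_union_right) (use fA in auto)
        finally show ?thesis .
      qed
      have "(-1::complex) ^ inv_count A (S - A) * (-1) ^ inv_count B (A - B)
          = (-1) ^ inv_count B (S - B) * (-1) ^ inv_count (A - B) (S - A)"
        unfolding i1 i2 power_add[symmetric] by (simp add: algebra_simps)
      thus "T2 (case p of (A, B) \<Rightarrow> (B, A - B)) = T1 p"
        unfolding T1_def T2_def p(1) using e1 by (simp add: algebra_simps)
    next
      fix q assume "q \<in> (SIGMA B:Pow S. Pow (S - B))"
      then obtain B C where q: "q = (B, C)" "B \<subseteq> S" "C \<subseteq> S - B" by auto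
      show "(case case q of (B, C) \<Rightarrow> (B \<union> C, B) of (A, B) \<Rightarrow> (B, A - B)) = q"
        using q by auto
      show "(case q of (B, C) \<Rightarrow> (B \<union> C, B)) \<in> (SIGMA A:Pow S. Pow A)"
        using q by auto
    qed
    also have "\<dots> = (\<Sum>B\<in>Pow S. \<Sum>C\<in>Pow (S - B). T2 (B, C))"
      using sum.Sigma[of "Pow S" "\<lambda>B. Pow (S - B)" "\<lambda>A B. T2 (A, B)"] fin by (auto intro: finite_subset)
    also have "\<dots> = wedge a (wedge b c) S"
      unfolding wedge_def T2_def using fin
      by (auto simp: sum_distrib_left sum_distrib_right algebra_simps intro!: sum.cong
           dest: finite_subset)
    finally show ?thesis .
  qed
qed


lemma wedge_single_supp:
  assumes "\<And>S. a S \<noteq> 0 \<Longrightarrow> S = A" "\<And>S. b S \<noteq> 0 \<Longrightarrow> S = B" "wedge a b S \<noteq> 0"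
  shows "S = A \<union> B"
proof -
  have fin: "finite S" using assms(3) by (metis wedge_infinite)
  hence "(\<Sum>C\<in>Pow S. (-1) ^ inv_count C (S - C) * a C * b (S - C)) \<noteq> 0"
    using assms(3) by (simp add: wedge_def)
  then obtain C where C: "C \<in> Pow S" "(-1) ^ inv_count C (S - C) * a C * b (S - C) \<noteq> 0"
    by (rule sum.not_neutral_contains_not_neutral)
  hence "C = A" "S - C = B" using assms(1,2) by auto
  thus ?thesis using C(1) by auto
qed

lemma pow2_cases: "A \<subseteq> {x, y} \<Longrightarrow> A = {} \<or> A = {x} \<or> A = {y} \<or> A = {x, y}"
  by blast

lemma wedge1_pair:
  assumes "supp t UNIV 1" "supp e UNIV 1" "x < y"
  shows "wedge t e {x, y} = t {x} * e {y} - t {y} * e {x}"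
proof -
  let ?g = "\<lambda>A. (-1) ^ inv_count A ({x, y} - A) * t A * e ({x, y} - A)"
  have "wedge t e {x, y} = sum ?g (Pow {x, y})" by (simp add: wedge_def)
  also have "\<dots> = sum ?g {{x}, {y}}"
  proof (rule sum.mono_neutral_right)
    show "\<forall>A\<in>Pow {x, y} - {{x}, {y}}. ?g A = 0"
    proof
      fix A assume A: "A \<in> Pow {x, y} - {{x}, {y}}"
      hence "A = {} \<or> A = {x, y}" using pow2_cases[of A x y] by auto
      thus "?g A = 0"
      proof
        assume "A = {}" thus ?thesis using assms(1) unfolding supp_def by auto
      next
        assume "A = {x, y}" thus ?thesis using assms(2) unfolding supp_def by auto
      qed
    qed
  qed auto
  also have "{x, y} - {x} = {y}" "{x, y} - {y} = {x}" using assms(3) by auto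
  hence "sum ?g {{x}, {y}} = t {x} * e {y} - t {y} * e {x}"
    using assms(3) by (simp add: inv_sum)
  finally show ?thesis .
qed

lemma wedge2_quad:
  assumes "supp P UNIV 2" "supp Q UNIV 2" "a < b" "b < c" "c < d"
  shows "wedge P Q {a, b, c, d} = P {a, b} * Q {c, d} - P {a, c} * Q {b, d} + P {a, d} * Q {b, c}
     + P {b, c} * Q {a, d} - P {b, d} * Q {a, c} + P {c, d} * Q {a, b}"
proof -
  let ?S = "{a, b, c, d}"
  let ?g = "\<lambda>A. (-1) ^ inv_count A (?S - A) * P A * Q (?S - A)"
  let ?six = "{{a, b}, {a, c}, {a, d}, {b, c}, {b, d}, {c, d}}"
  have "wedge P Q ?S = sum ?g (Pow ?S)" by (simp add: wedge_def)
  also have "\<dots> = sum ?g ?six"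
  proof (rule sum.mono_neutral_right)
    show "\<forall>A\<in>Pow ?S - ?six. ?g A = 0"
    proof
      fix A assume A: "A \<in> Pow ?S - ?six"
      show "?g A = 0"
      proof (cases "P A = 0")
        case False
        hence "card A = 2" using assms(1) unfolding supp_def by auto
        then obtain x y where "x \<noteq> y" "A = {x, y}" by (auto simp: card_2_iff)
        hence "A \<in> ?six" using A by auto
        thus ?thesis using A by auto
      qed simp
    qed
  qed auto
  also have "\<dots> = ?g {a, b} + ?g {a, c} + ?g {a, d} + ?g {b, c} + ?g {b, d} + ?g {c, d}"
    using assms(3-5) by (simp add: doubleton_eq_iff algebra_simps)
  also have "?S - {a, b} = {c, d}" "?S - {a, c} = {b, d}" "?S - {a, d} = {b, c}"
     "?S - {b, c} = {a, d}" "?S - {b, d} = {a, c}" "?S - {c, d} = {a, b}"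
    using assms(3-5) by auto
  moreover have "\<not> b < a" "\<not> c < a" "\<not> d < a" "\<not> c < b" "\<not> d < b" "\<not> d < c"
     "a < c" "a < d" "b < d" "a \<noteq> b" "a \<noteq> c" "a \<noteq> d" "b \<noteq> c" "b \<noteq> d" "c \<noteq> d"
    using assms(3-5) by auto
  ultimately show ?thesis using assms(3-5) by (simp add: inv_sum algebra_simps)
qed


definition mm :: "(nat \<Rightarrow> complex) \<Rightarrow> (nat \<Rightarrow> complex) \<Rightarrow> nat \<Rightarrow> nat \<Rightarrow> complex" where
  "mm u v p q = u p * v q - u q * v p"

definition FF :: "(nat \<Rightarrow> complex) \<Rightarrow> (nat \<Rightarrow> complex) \<Rightarrow> (nat \<Rightarrow> complex) \<Rightarrow> (nat \<Rightarrow> complex) \<Rightarrow> complex" where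
  "FF u v x y = mm u v 0 1 * mm x y 2 3 - mm u v 0 2 * mm x y 1 3 + mm u v 0 3 * mm x y 1 2
     + mm u v 1 2 * mm x y 0 3 - mm u v 1 3 * mm x y 0 2 + mm u v 2 3 * mm x y 0 1"

lemma form10_single: "x < 4 \<Longrightarrow> form10 4 u {x} = u x"
  by (simp add: form10_def)

lemma form01_single: "4 \<le> x \<Longrightarrow> x < 8 \<Longrightarrow> form01 4 u {x} = cnj (u (x - 4))"
  by (simp add: form01_def)

lemma supp10U: "supp (form10 4 u) UNIV 1" by (rule supp_mono[OF supp_form10]) simp
lemma supp01U: "supp (form01 4 u) UNIV 1" by (rule supp_mono[OF supp_form01]) simp

lemma supp_wedge': "supp a X k \<Longrightarrow> supp b X l \<Longrightarrow> n = k + l \<Longrightarrow> supp (wedge a b) X n"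
  using supp_wedge by blast

lemma supp10_2U: "supp (wedge (form10 4 u) (form10 4 v)) UNIV 2"
  by (rule supp_wedge'[OF supp10U supp10U]) simp
lemma supp01_2U: "supp (wedge (form01 4 u) (form01 4 v)) UNIV 2"
  by (rule supp_wedge'[OF supp01U supp01U]) simp

lemma pair10: "x < y \<Longrightarrow> y < 4 \<Longrightarrow> wedge (form10 4 u) (form10 4 v) {x, y} = mm u v x y"
  by (simp add: wedge1_pair[OF supp10U supp10U] form10_single mm_def)

lemma pair01: "x < y \<Longrightarrow> 4 \<le> x \<Longrightarrow> y < 8 \<Longrightarrow>
  wedge (form01 4 u) (form01 4 v) {x, y} = cnj (mm u v (x - 4) (y - 4))"
  by (simp add: wedge1_pair[OF supp01U supp01U] form01_single mm_def)

lemma holo_val: "wedge (wedge (form10 4 u) (form10 4 v)) (wedge (form10 4 x) (form10 4 y)) {0, 1, 2, 3}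
   = FF u v x y"
  by (simp add: wedge2_quad[OF supp10_2U supp10_2U] pair10 FF_def)

lemma anti_val: "wedge (wedge (form01 4 u) (form01 4 v)) (wedge (form01 4 x) (form01 4 y)) {4, 5, 6, 7}
   = cnj (FF u v x y)"
  by (simp add: wedge2_quad[OF supp01_2U supp01_2U] pair01 FF_def)



lemma test_eq:
  "test_form 4 [g1, g2] = wedge (wedge (form10 4 g1) (form10 4 g2)) (wedge (form01 4 g1) (form01 4 g2))"
proof -
  let ?G1 = "form10 4 g1" and ?G2 = "form10 4 g2" and ?H1 = "form01 4 g1" and ?H2 = "form01 4 g2"
  have u: "wedge (fscale \<i> (wedge ?G2 ?H2)) unit_form = fscale \<i> (wedge ?G2 ?H2)"
    by (rule wedge_unit_right) (simp add: fscale_def wedge_infinite)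
  have u2: "wedge ?H2 unit_form = ?H2"
    by (rule wedge_unit_right) (simp add: form01_def)
  have c: "wedge ?H1 ?G2 = fscale (-1) (wedge ?G2 ?H1)"
    using wedge_comm[OF supp01U supp10U, of g1 g2] by simp
  have "test_form 4 [g1, g2] = fscale (\<i> * \<i>) (wedge ?G1 (wedge ?H1 (wedge ?G2 ?H2)))"
    by (simp add: test_form_def u u2 wedge_fscale_left wedge_fscale_right fscale_fscale wedge_assoc)
  also have "wedge ?H1 (wedge ?G2 ?H2) = wedge (wedge ?H1 ?G2) ?H2" by (simp add: wedge_assoc)
  also have "\<dots> = fscale (-1) (wedge ?G2 (wedge ?H1 ?H2))"
    by (simp add: c wedge_fscale_left wedge_assoc)
  finally show ?thesis
    by (simp add: wedge_fscale_right fscale_fscale fscale_one wedge_assoc)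
qed

lemma rearr:
  assumes "supp O2 UNIV 2" "supp B UNIV 2"
  shows "wedge (wedge O1 O2) (wedge B Bb) = wedge (wedge O1 B) (wedge O2 Bb)"
proof -
  have c: "wedge O2 B = wedge B O2" using wedge_comm[OF assms] by (simp add: fscale_one)
  have "wedge (wedge O1 O2) (wedge B Bb) = wedge O1 (wedge (wedge O2 B) Bb)"
    by (simp add: wedge_assoc)
  also have "\<dots> = wedge (wedge O1 B) (wedge O2 Bb)" unfolding c by (simp add: wedge_assoc)
  finally show ?thesis .
qed

lemma holo_supp: "wedge (wedge (form10 4 u) (form10 4 v)) (wedge (form10 4 x) (form10 4 y)) S \<noteq> 0
   \<Longrightarrow> S = {0, 1, 2, 3}"
proof -
  assume h: "wedge (wedge (form10 4 u) (form10 4 v)) (wedge (form10 4 x) (form10 4 y)) S \<noteq> 0"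
  have "supp (wedge (wedge (form10 4 u) (form10 4 v)) (wedge (form10 4 x) (form10 4 y))) {..<4} 4"
    by (intro supp_wedge'[where k=2 and l=2] supp_wedge'[where k=1 and l=1] supp_form10) auto
  from supp_top[OF this _ _ h] have "S = {..<4}" by simp
  thus ?thesis by auto
qed

lemma anti_supp: "wedge (wedge (form01 4 u) (form01 4 v)) (wedge (form01 4 x) (form01 4 y)) S \<noteq> 0
   \<Longrightarrow> S = {4, 5, 6, 7}"
proof -
  assume h: "wedge (wedge (form01 4 u) (form01 4 v)) (wedge (form01 4 x) (form01 4 y)) S \<noteq> 0"
  have "supp (wedge (wedge (form01 4 u) (form01 4 v)) (wedge (form01 4 x) (form01 4 y))) {4..<8} 4"
    by (intro supp_wedge'[where k=2 and l=2] supp_wedge'[where k=1 and l=1] supp_form01) auto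
  from supp_top[OF this _ _ h] have "S = {4..<8}" by simp
  thus ?thesis by auto
qed

lemma S0_eq: "{0, 1, 2, 3} \<union> {4, 5, 6, 7} = {..<(8::nat)}" by auto

lemma key:
  "wedge (wedge (wedge (form10 4 u) (form10 4 v)) (wedge (form01 4 u') (form01 4 v')))
     (test_form 4 [g1, g2]) {..<8} = FF u v g1 g2 * cnj (FF u' v' g1 g2)"
proof -
  let ?X = "wedge (wedge (form10 4 u) (form10 4 v)) (wedge (form10 4 g1) (form10 4 g2))"
  let ?Y = "wedge (wedge (form01 4 u') (form01 4 v')) (wedge (form01 4 g1) (form01 4 g2))"
  have e: "wedge (wedge (wedge (form10 4 u) (form10 4 v)) (wedge (form01 4 u') (form01 4 v')))
     (test_form 4 [g1, g2]) = wedge ?X ?Y"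
    unfolding test_eq by (rule rearr[OF supp01_2U supp10_2U])
  have "wedge ?X ?Y ({0, 1, 2, 3} \<union> {4, 5, 6, 7}) =
     (-1) ^ inv_count {0, 1, 2, 3} {4, 5, 6, 7::nat} * ?X {0, 1, 2, 3} * ?Y {4, 5, 6, 7}"
    by (rule wedge_single[OF holo_supp anti_supp]) auto
  also have "\<dots> = (-1) ^ inv_count {0, 1, 2, 3} {4, 5, 6, 7::nat} * FF u v g1 g2 * cnj (FF u' v' g1 g2)"
    unfolding holo_val anti_val ..
  also have "inv_count {0, 1, 2, 3} {4, 5, 6, 7::nat} = 0" by (simp add: inv_sum)
  finally have "wedge ?X ?Y {..<8} = FF u v g1 g2 * cnj (FF u' v' g1 g2)"
    unfolding S0_eq by simp
  thus ?thesis unfolding e .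
qed


definition sing :: "form \<Rightarrow> nat set \<Rightarrow> bool" where
  "sing a A \<longleftrightarrow> (\<forall>S. a S \<noteq> 0 \<longrightarrow> S = A)"

lemma sing_wedge: "sing a A \<Longrightarrow> sing b B \<Longrightarrow> sing (wedge a b) (A \<union> B)"
  unfolding sing_def using wedge_single_supp by metis

lemma sing_wedge_val: "sing a A \<Longrightarrow> sing b B \<Longrightarrow> finite A \<Longrightarrow> finite B \<Longrightarrow> A \<inter> B = {} \<Longrightarrow>
   wedge a b (A \<union> B) = (-1) ^ inv_count A B * a A * b B"
  unfolding sing_def by (rule wedge_single) auto

definition DD :: "nat \<Rightarrow> form" where
  "DD k = fscale \<i> (wedge (dz 4 k) (dzb 4 k))"

lemma sing_dz: "k < 4 \<Longrightarrow> sing (dz 4 k) {k}"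
  unfolding sing_def dz_def form10_def by (auto simp: card_Suc_eq split: if_splits)

lemma sing_dzb: "k < 4 \<Longrightarrow> sing (dzb 4 k) {k + 4}"
  unfolding sing_def dzb_def form01_def by (auto simp: card_Suc_eq split: if_splits)

lemma sing_DD: "k < 4 \<Longrightarrow> sing (DD k) {k, k + 4}"
  using sing_wedge[OF sing_dz sing_dzb, of k k] unfolding DD_def sing_def fscale_def by auto

lemma val_DD: "k < 4 \<Longrightarrow> DD k {k, k + 4} = \<i>"
  unfolding DD_def fscale_def dz_def dzb_def
  by (simp add: wedge1_pair[OF supp10U supp01U] form10_single form01_single) (simp add: form10_def)

lemma vol_unfold: "vol 4 = wedge (DD 0) (wedge (DD 1) (wedge (DD 2) (DD 3)))"
proof -
  have u: "wedge (DD 3) unit_form = DD 3"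
    by (rule wedge_unit_right) (simp add: DD_def fscale_def wedge_infinite)
  have "[0..<4] = [0, 1, 2, 3::nat]" by (simp add: upt_rec)
  hence "vol 4 = wedge (DD 0) (wedge (DD 1) (wedge (DD 2) (wedge (DD 3) unit_form)))"
    unfolding vol_def DD_def by (simp only: foldr_Cons foldr_Nil o_apply id_apply)
  thus ?thesis by (simp only: u)
qed

lemma vol_eq: "vol 4 = (\<lambda>S. if S = {..<8} then 1 else 0)"
proof -
  have s0: "sing (DD 0) {0, 4}" and s1: "sing (DD 1) {1, 5}" and s2: "sing (DD 2) {2, 6}"
    and s3: "sing (DD 3) {3, 7}"
    using sing_DD[of 0] sing_DD[of 1] sing_DD[of 2] sing_DD[of 3] by simp_all
  have v0: "DD 0 {0, 4} = \<i>" and v1: "DD 1 {1, 5} = \<i>" and v2: "DD 2 {2, 6} = \<i>"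
    and v3: "DD 3 {3, 7} = \<i>"
    using val_DD[of 0] val_DD[of 1] val_DD[of 2] val_DD[of 3] by simp_all
  have s23: "sing (wedge (DD 2) (DD 3)) ({2, 6} \<union> {3, 7})" by (rule sing_wedge[OF s2 s3])
  have w23: "wedge (DD 2) (DD 3) ({2, 6} \<union> {3, 7}) = 1"
    by (subst sing_wedge_val[OF s2 s3]) (simp_all add: v2 v3 inv_sum)
  have s123: "sing (wedge (DD 1) (wedge (DD 2) (DD 3))) ({1, 5} \<union> ({2, 6} \<union> {3, 7}))"
    by (rule sing_wedge[OF s1 s23])
  have w123: "wedge (DD 1) (wedge (DD 2) (DD 3)) ({1, 5} \<union> ({2, 6} \<union> {3, 7})) = \<i>"
    by (subst sing_wedge_val[OF s1 s23]) (simp_all only: w23 v1, simp_all add: inv_sum)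
  have s0123: "sing (vol 4) ({0, 4} \<union> ({1, 5} \<union> ({2, 6} \<union> {3, 7})))"
    unfolding vol_unfold by (rule sing_wedge[OF s0 s123])
  have w0123: "vol 4 ({0, 4} \<union> ({1, 5} \<union> ({2, 6} \<union> {3, 7}))) = 1"
    unfolding vol_unfold
    by (subst sing_wedge_val[OF s0 s123]) (simp_all only: w123 v0, simp_all add: inv_sum)
  have e: "{0, 4} \<union> ({1, 5} \<union> ({2, 6} \<union> {3, 7})) = {..<8::nat}" by auto
  show ?thesis
  proof (rule ext)
    fix S
    show "vol 4 S = (if S = {..<8} then 1 else 0)"
    proof (cases "S = {..<8}")
      case True thus ?thesis using w0123 unfolding e by (simp only: simp_thms if_True)
    next
      case False
      from s0123 have "\<forall>S. vol 4 S \<noteq> 0 \<longrightarrow> S = {..<8}" unfolding e sing_def .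
      hence "vol 4 S = 0" using False by blast
      thus ?thesis using False by (simp only: if_not_P if_False)
    qed
  qed
qed




definition pj :: "nat \<Rightarrow> nat" where
  "pj j = (if j = 1 then 0 else if j = 2 then 0 else if j = 3 then 0 else if j = 4 then 1 else if j = 5 then 1 else 2)"
definition qj :: "nat \<Rightarrow> nat" where
  "qj j = (if j = 1 then 1 else if j = 2 then 2 else if j = 3 then 3 else if j = 4 then 2 else 3)"
definition sj :: "nat \<Rightarrow> complex" where
  "sj j = (if j = 1 then 1 else if j = 2 then 1 else if j = 3 then 1 else if j = 4 then 1 else if j = 5 then -1 else 1)"

definition cc :: "(nat \<Rightarrow> nat \<Rightarrow> complex) \<Rightarrow> (nat \<Rightarrow> complex) \<Rightarrow> (nat \<Rightarrow> complex) \<Rightarrow> nat \<Rightarrow> complex" where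
  "cc w g1 g2 j = sj j * FF (w (pj j)) (w (qj j)) g1 g2"

lemma Omega_eq: "Omega w j = fscale (sj j) (wedge (form10 4 (w (pj j))) (form10 4 (w (qj j))))"
  unfolding Omega_def pj_def qj_def sj_def Let_def by (auto simp: fscale_one)

lemma OmegaB_eq: "OmegaB w j = fscale (sj j) (wedge (form01 4 (w (pj j))) (form01 4 (w (qj j))))"
  unfolding OmegaB_def pj_def qj_def sj_def Let_def by (auto simp: fscale_one)

lemma cnj_sj: "cnj (sj j) = sj j" unfolding sj_def by auto

lemma okey: "wedge (wedge (Omega w j) (OmegaB w k)) (test_form 4 [g1, g2]) {..<8}
   = cc w g1 g2 j * cnj (cc w g1 g2 k)"
  unfolding Omega_eq OmegaB_eq cc_def
  by (simp only: wedge_fscale_left wedge_fscale_right) (simp add: fscale_def key cnj_sj)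

lemma supp_Omega: "supp (Omega w j) {..<8} 2"
  unfolding Omega_eq
  by (intro supp_fscale supp_wedge'[where k=1 and l=1] supp_mono[OF supp_form10]) auto

lemma supp_OmegaB: "supp (OmegaB w j) {..<8} 2"
  unfolding OmegaB_eq
  by (intro supp_fscale supp_wedge'[where k=1 and l=1] supp_mono[OF supp_form01]) auto

lemma l17: "[1..<7] = [1, 2, 3, 4, 5, 6::nat]" by (simp add: upt_rec)

lemma alpha_unfold: "alpha_form w a =
  fadd (fadd (fadd (wedge (Omega w 1) (OmegaB w 1)) (fadd (wedge (Omega w 2) (OmegaB w 2))
   (fadd (wedge (Omega w 3) (OmegaB w 3)) (fadd (wedge (Omega w 4) (OmegaB w 4))
   (fadd (wedge (Omega w 5) (OmegaB w 5)) (fadd (wedge (Omega w 6) (OmegaB w 6)) (\<lambda>_. 0)))))))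
   (fscale a (wedge (Omega w 1) (OmegaB w 6)))) (fscale (cnj a) (wedge (Omega w 6) (OmegaB w 1)))"
  unfolding alpha_form_def l17 by (simp only: foldr_Cons foldr_Nil o_apply id_apply)

lemma supp_alpha: "supp (alpha_form w a) {..<8} 4"
  unfolding alpha_unfold
  by (intro supp_fadd supp_fscale supp_zero supp_wedge'[OF supp_Omega supp_OmegaB]) auto

lemma supp_test: "supp (test_form 4 [g1, g2]) {..<8} 4"
  unfolding test_eq
  by (intro supp_wedge'[where k=2 and l=2] supp_wedge'[where k=1 and l=1]
       supp_mono[OF supp_form10] supp_mono[OF supp_form01]) auto

definition Htot :: "(nat \<Rightarrow> nat \<Rightarrow> complex) \<Rightarrow> complex \<Rightarrow> (nat \<Rightarrow> complex) \<Rightarrow> (nat \<Rightarrow> complex) \<Rightarrow> complex" where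
  "Htot w a g1 g2 = (let c = cc w g1 g2 in
     c 1 * cnj (c 1) + c 2 * cnj (c 2) + c 3 * cnj (c 3) + c 4 * cnj (c 4) + c 5 * cnj (c 5)
     + c 6 * cnj (c 6) + a * (c 1 * cnj (c 6)) + cnj a * (c 6 * cnj (c 1)))"

lemma total_val: "wedge (alpha_form w a) (test_form 4 [g1, g2]) {..<8} = Htot w a g1 g2"
  unfolding alpha_unfold
  by (simp only: wedge_fadd_left wedge_fscale_left wedge_zero_left) (simp add: fadd_def fscale_def okey Htot_def Let_def)

lemma total_form: "wedge (alpha_form w a) (test_form 4 [g1, g2]) = fscale (Htot w a g1 g2) (vol 4)"
proof (rule ext)
  fix S
  have sp: "supp (wedge (alpha_form w a) (test_form 4 [g1, g2])) {..<8} 8"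
    by (rule supp_wedge'[OF supp_alpha supp_test]) simp
  show "wedge (alpha_form w a) (test_form 4 [g1, g2]) S = fscale (Htot w a g1 g2) (vol 4) S"
  proof (cases "S = {..<8}")
    case True thus ?thesis by (simp add: total_val vol_eq fscale_def)
  next
    case False
    hence "wedge (alpha_form w a) (test_form 4 [g1, g2]) S = 0"
      using supp_top[OF sp] by auto
    thus ?thesis using False by (simp add: vol_eq fscale_def)
  qed
qed



definition ee :: "nat \<Rightarrow> nat \<Rightarrow> complex" where "ee i = (\<lambda>k. if k = i then 1 else 0)"

lemma sum4: "(\<Sum>j<4. f j) = f 0 + f 1 + f 2 + f (3::nat)" by (simp add: eval_nat_numeral)

lemma hyp4:
  fixes w :: "nat \<Rightarrow> nat \<Rightarrow> complex" and c :: "nat \<Rightarrow> complex" and v :: "nat \<Rightarrow> complex"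
  assumes "\<forall>k<4. (\<Sum>j<4. c j * w j k) = v k"
  shows "v 0 = c 0 * w 0 0 + c 1 * w 1 0 + c 2 * w 2 0 + c 3 * w 3 0"
    "v 1 = c 0 * w 0 1 + c 1 * w 1 1 + c 2 * w 2 1 + c 3 * w 3 1"
    "v 2 = c 0 * w 0 2 + c 1 * w 1 2 + c 2 * w 2 2 + c 3 * w 3 2"
    "v 3 = c 0 * w 0 3 + c 1 * w 1 3 + c 2 * w 2 3 + c 3 * w 3 3"
  using assms by (auto simp: sum4)

lemma lin1: fixes w :: "nat \<Rightarrow> nat \<Rightarrow> complex" and c :: "nat \<Rightarrow> complex"
  assumes "\<forall>k<4. (\<Sum>j<4. c j * w j k) = v k"
  shows "FF v y z t = (\<Sum>j<4. c j * FF (w j) y z t)"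
  unfolding sum4 FF_def mm_def hyp4[OF assms] by algebra

lemma lin2: fixes w :: "nat \<Rightarrow> nat \<Rightarrow> complex" and c :: "nat \<Rightarrow> complex"
  assumes "\<forall>k<4. (\<Sum>j<4. c j * w j k) = v k"
  shows "FF x v z t = (\<Sum>j<4. c j * FF x (w j) z t)"
  unfolding sum4 FF_def mm_def hyp4[OF assms] by algebra

lemma lin3: fixes w :: "nat \<Rightarrow> nat \<Rightarrow> complex" and c :: "nat \<Rightarrow> complex"
  assumes "\<forall>k<4. (\<Sum>j<4. c j * w j k) = v k"
  shows "FF x y v t = (\<Sum>j<4. c j * FF x y (w j) t)"
  unfolding sum4 FF_def mm_def hyp4[OF assms] by algebra

lemma lin4: fixes w :: "nat \<Rightarrow> nat \<Rightarrow> complex" and c :: "nat \<Rightarrow> complex"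
  assumes "\<forall>k<4. (\<Sum>j<4. c j * w j k) = v k"
  shows "FF x y z v = (\<Sum>j<4. c j * FF x y z (w j))"
  unfolding sum4 FF_def mm_def hyp4[OF assms] by algebra

lemma FFz: "FF x x z t = 0" "FF x y x t = 0" "FF x y z x = 0" "FF x y y t = 0" "FF x y z y = 0" "FF x y z z = 0"
  unfolding FF_def mm_def by algebra+

lemma all4_iff: "(\<forall>a::nat. a < 4 \<longrightarrow> P a) = (P 0 \<and> P 1 \<and> P 2 \<and> P 3)"
  by (auto simp: less_Suc_eq eval_nat_numeral)

lemma permz:
  fixes w :: "nat \<Rightarrow> nat \<Rightarrow> complex"
  shows "FF (w 0) (w 1) (w 2) (w 3) = 0 \<Longrightarrow>
    \<forall>a<4. \<forall>b<4. \<forall>c<4. \<forall>d<4. FF (w a) (w b) (w c) (w d) = 0"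
  apply (simp only: all4_iff)
  apply (intro conjI)
  apply (simp_all only: FFz simp_thms)
  apply (unfold FF_def mm_def)
  by algebra+


lemma ee_val: "FF (ee 0) (ee 1) (ee 2) (ee 3) = 1"
  by (simp add: FF_def mm_def ee_def)

lemma sum_nz: "(\<Sum>j<(4::nat). (c j :: complex) * f j) \<noteq> 0 \<Longrightarrow> \<exists>j<4. f j \<noteq> 0"
  by (metis (no_types, lifting) lessThan_iff mult_zero_right sum.neutral)

lemma Delta_nz:
  fixes w :: "nat \<Rightarrow> nat \<Rightarrow> complex"
  assumes span: "\<And>v. \<exists>c. \<forall>k<4. (\<Sum>j<4. c j * w j k) = v k"
  shows "FF (w 0) (w 1) (w 2) (w 3) \<noteq> 0"
proof
  assume D: "FF (w 0) (w 1) (w 2) (w 3) = 0"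
  obtain c0 where c0: "\<forall>k<4. (\<Sum>j<4. c0 j * w j k) = ee 0 k" using span by blast
  obtain c1 where c1: "\<forall>k<4. (\<Sum>j<4. c1 j * w j k) = ee 1 k" using span by blast
  obtain c2 where c2: "\<forall>k<4. (\<Sum>j<4. c2 j * w j k) = ee 2 k" using span by blast
  obtain c3 where c3: "\<forall>k<4. (\<Sum>j<4. c3 j * w j k) = ee 3 k" using span by blast
  have "(\<Sum>j<4. c0 j * FF (w j) (ee 1) (ee 2) (ee 3)) \<noteq> 0"
    using lin1[OF c0] ee_val by simp
  hence "\<exists>j0<4. FF (w j0) (ee 1) (ee 2) (ee 3) \<noteq> 0" by (rule sum_nz)
  then obtain j0 where j0: "j0 < 4" "FF (w j0) (ee 1) (ee 2) (ee 3) \<noteq> 0" by blast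
  have "(\<Sum>j<4. c1 j * FF (w j0) (w j) (ee 2) (ee 3)) \<noteq> 0"
    using lin2[OF c1] j0 by simp
  hence "\<exists>j1<4. FF (w j0) (w j1) (ee 2) (ee 3) \<noteq> 0" by (rule sum_nz)
  then obtain j1 where j1: "j1 < 4" "FF (w j0) (w j1) (ee 2) (ee 3) \<noteq> 0" by blast
  have "(\<Sum>j<4. c2 j * FF (w j0) (w j1) (w j) (ee 3)) \<noteq> 0"
    using lin3[OF c2] j1 by simp
  hence "\<exists>j2<4. FF (w j0) (w j1) (w j2) (ee 3) \<noteq> 0" by (rule sum_nz)
  then obtain j2 where j2: "j2 < 4" "FF (w j0) (w j1) (w j2) (ee 3) \<noteq> 0" by blast
  have "(\<Sum>j<4. c3 j * FF (w j0) (w j1) (w j2) (w j)) \<noteq> 0"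
    using lin4[OF c3] j2 by simp
  hence "\<exists>j3<4. FF (w j0) (w j1) (w j2) (w j3) \<noteq> 0" by (rule sum_nz)
  then obtain j3 where j3: "j3 < 4" "FF (w j0) (w j1) (w j2) (w j3) \<noteq> 0" by blast
  thus False using permz[OF D] j0 j1 j2 by blast
qed


lemma plucker: "cc w g1 g2 1 * cc w g1 g2 6 + cc w g1 g2 2 * cc w g1 g2 5 + cc w g1 g2 3 * cc w g1 g2 4 = 0"
  unfolding cc_def sj_def pj_def qj_def by (simp add: FF_def mm_def) algebra

lemma Htot_real: "Htot w a g1 g2 = complex_of_real
   ((cmod (cc w g1 g2 1))^2 + (cmod (cc w g1 g2 2))^2 + (cmod (cc w g1 g2 3))^2 + (cmod (cc w g1 g2 4))^2
    + (cmod (cc w g1 g2 5))^2 + (cmod (cc w g1 g2 6))^2 + 2 * Re (a * (cc w g1 g2 1 * cnj (cc w g1 g2 6))))"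
proof -
  have e: "cnj a * (cc w g1 g2 6 * cnj (cc w g1 g2 1)) = cnj (a * (cc w g1 g2 1 * cnj (cc w g1 g2 6)))"
    by simp
  show ?thesis unfolding Htot_def Let_def e
    by (simp only: complex_norm_square[symmetric] add.assoc complex_add_cnj of_real_add)
qed

lemma sq2: "2 * (x * y) \<le> x^2 + (y::real)^2"
proof -
  have "0 \<le> (x - y)^2" by simp
  moreover have "(x - y)^2 = x^2 + y^2 - 2 * (x * y)" by (simp add: power2_eq_square algebra_simps)
  ultimately show ?thesis by linarith
qed

lemma Htot_nonneg:
  assumes "cmod a \<le> 2"
  shows "0 \<le> (cmod (cc w g1 g2 1))^2 + (cmod (cc w g1 g2 2))^2 + (cmod (cc w g1 g2 3))^2 + (cmod (cc w g1 g2 4))^2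
    + (cmod (cc w g1 g2 5))^2 + (cmod (cc w g1 g2 6))^2 + 2 * Re (a * (cc w g1 g2 1 * cnj (cc w g1 g2 6)))"
proof -
  define c where "c = cc w g1 g2"
  define n where "n = (\<lambda>j. cmod (c j))"
  have n0: "\<And>j. n j \<ge> 0" unfolding n_def by simp
  have re: "- (cmod a * (n 1 * n 6)) \<le> Re (a * (c 1 * cnj (c 6)))"
  proof -
    have "\<bar>Re (a * (c 1 * cnj (c 6)))\<bar> \<le> cmod (a * (c 1 * cnj (c 6)))" by (rule abs_Re_le_cmod)
    also have "\<dots> = cmod a * (n 1 * n 6)" unfolding n_def by (simp add: norm_mult)
    finally show ?thesis by linarith
  qed
  have h1: "cmod a * (n 1 * n 6) \<le> 2 * (n 1 * n 6)"
    using assms n0 by (intro mult_right_mono) auto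
  have h2: "n 1 * n 6 \<le> n 2 * n 5 + n 3 * n 4"
  proof -
    have "c 1 * c 6 = - (c 2 * c 5 + c 3 * c 4)" using plucker[of w g1 g2] unfolding c_def
      by (simp add: algebra_simps eq_neg_iff_add_eq_0)
    hence "n 1 * n 6 = cmod (c 2 * c 5 + c 3 * c 4)" unfolding n_def by (metis norm_minus_cancel norm_mult)
    also have "\<dots> \<le> cmod (c 2 * c 5) + cmod (c 3 * c 4)" by (rule norm_triangle_ineq)
    finally show ?thesis unfolding n_def by (simp add: norm_mult)
  qed
  have h3: "2 * (n 2 * n 5) \<le> (n 2)^2 + (n 5)^2" by (rule sq2)
  have h4: "2 * (n 3 * n 4) \<le> (n 3)^2 + (n 4)^2" by (rule sq2)
  have h5: "2 * (n 1 * n 6) \<le> (n 1)^2 + (n 6)^2" by (rule sq2)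
  have "0 \<le> (n 1)^2 + (n 2)^2 + (n 3)^2 + (n 4)^2 + (n 5)^2 + (n 6)^2 + 2 * Re (a * (c 1 * cnj (c 6)))"
    using re h1 h2 h3 h4 h5 by linarith
  thus ?thesis unfolding n_def c_def .
qed


lemma idents:
  fixes w :: "nat \<Rightarrow> nat \<Rightarrow> complex" and u :: complex
  shows "FF (w 0) (w 1) (\<lambda>k. w 0 k + w 2 k) (\<lambda>k. w 1 k + u * w 3 k) = u * FF (w 0) (w 1) (w 2) (w 3)"
   "FF (w 0) (w 2) (\<lambda>k. w 0 k + w 2 k) (\<lambda>k. w 1 k + u * w 3 k) = 0"
   "FF (w 0) (w 3) (\<lambda>k. w 0 k + w 2 k) (\<lambda>k. w 1 k + u * w 3 k) = - FF (w 0) (w 1) (w 2) (w 3)"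
   "FF (w 1) (w 2) (\<lambda>k. w 0 k + w 2 k) (\<lambda>k. w 1 k + u * w 3 k) = u * FF (w 0) (w 1) (w 2) (w 3)"
   "FF (w 1) (w 3) (\<lambda>k. w 0 k + w 2 k) (\<lambda>k. w 1 k + u * w 3 k) = 0"
   "FF (w 2) (w 3) (\<lambda>k. w 0 k + w 2 k) (\<lambda>k. w 1 k + u * w 3 k) = FF (w 0) (w 1) (w 2) (w 3)"
  unfolding FF_def mm_def by algebra+

lemma cc_vals:
  "cc w g1 g2 1 = FF (w 0) (w 1) g1 g2" "cc w g1 g2 2 = FF (w 0) (w 2) g1 g2"
  "cc w g1 g2 3 = FF (w 0) (w 3) g1 g2" "cc w g1 g2 4 = FF (w 1) (w 2) g1 g2"
  "cc w g1 g2 5 = - FF (w 1) (w 3) g1 g2" "cc w g1 g2 6 = FF (w 2) (w 3) g1 g2"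
  by (simp_all add: cc_def sj_def pj_def qj_def)

lemma neg_case:
  fixes w :: "nat \<Rightarrow> nat \<Rightarrow> complex" and a :: complex
  assumes a2: "2 < cmod a"
    and span: "\<And>v. \<exists>c. \<forall>k<4. (\<Sum>j<4. c j * w j k) = v k"
  shows "Re (Htot w a (\<lambda>k. w 0 k + w 2 k) (\<lambda>k. w 1 k + (- cnj a / complex_of_real (cmod a)) * w 3 k)) < 0"
proof -
  define u where "u = - cnj a / complex_of_real (cmod a)"
  define D where "D = FF (w 0) (w 1) (w 2) (w 3)"
  have Dnz: "D \<noteq> 0" unfolding D_def by (rule Delta_nz[OF span])
  have an: "cmod a \<noteq> 0" using a2 by linarith
  have aa: "a * cnj a = complex_of_real ((cmod a)^2)" by (rule complex_norm_square[symmetric])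
  have uu: "u * cnj u = 1"
  proof -
    have "u * cnj u = (a * cnj a) / (complex_of_real (cmod a))^2"
      unfolding u_def by (simp add: power2_eq_square algebra_simps)
    also have "\<dots> = 1" using an unfolding aa by (simp add: power2_eq_square)
    finally show ?thesis .
  qed
  have au: "a * u = - complex_of_real (cmod a)"
  proof -
    have "a * u = - (a * cnj a) / complex_of_real (cmod a)" unfolding u_def by simp
    also have "\<dots> = - complex_of_real (cmod a)" using an unfolding aa by (simp add: power2_eq_square)
    finally show ?thesis .
  qed
  have au': "cnj a * cnj u = - complex_of_real (cmod a)"
    using arg_cong[OF au, of cnj] by simp
  have "Htot w a (\<lambda>k. w 0 k + w 2 k) (\<lambda>k. w 1 k + u * w 3 k)
      = (D * cnj D) * (2 * (u * cnj u) + 2 + a * u + cnj a * cnj u)"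
    unfolding Htot_def Let_def cc_vals idents D_def[symmetric]
    by (simp add: algebra_simps)
  also have "\<dots> = complex_of_real ((cmod D)^2 * (4 - 2 * cmod a))"
    unfolding uu au au' complex_norm_square[of D, symmetric] by simp
  finally have H: "Htot w a (\<lambda>k. w 0 k + w 2 k) (\<lambda>k. w 1 k + u * w 3 k) =
     complex_of_real ((cmod D)^2 * (4 - 2 * cmod a))" .
  have "0 < (cmod D)^2" using Dnz by simp
  moreover have "4 - 2 * cmod a < 0" using a2 by simp
  ultimately have "(cmod D)^2 * (4 - 2 * cmod a) < 0" by (simp add: mult_pos_neg)
  thus ?thesis using H unfolding u_def by simp
qed

theorem proposition4:
  fixes w :: "nat \<Rightarrow> nat \<Rightarrow> complex" and a :: complex
  assumes indep: "\<And>c. (\<forall>k<4. (\<Sum>j<4. c j * w j k) = 0) \<Longrightarrow> \<forall>j<4. c j = 0"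
    and span: "\<And>v. \<exists>c. \<forall>k<4. (\<Sum>j<4. c j * w j k) = v k"
  shows "positive_form 4 2 (alpha_form w a) \<longleftrightarrow> cmod a \<le> 2"
proof
  assume pos: "positive_form 4 2 (alpha_form w a)"
  show "cmod a \<le> 2"
  proof (rule ccontr)
    assume "\<not> cmod a \<le> 2"
    hence a2: "2 < cmod a" by simp
    define g1 where "g1 = (\<lambda>k. w 0 k + w 2 k)"
    define g2 where "g2 = (\<lambda>k. w 1 k + (- cnj a / complex_of_real (cmod a)) * w 3 k)"
    have "\<exists>r\<ge>0. wedge (alpha_form w a) (test_form 4 [g1, g2]) = fscale (complex_of_real r) (vol 4)"
      using pos unfolding positive_form_def by (drule_tac x="[g1, g2]" in spec) simp
    then obtain r where r: "r \<ge> 0" "wedge (alpha_form w a) (test_form 4 [g1, g2]) = fscale (complex_of_real r) (vol 4)"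
      by blast
    have "fscale (Htot w a g1 g2) (vol 4) {..<8} = fscale (complex_of_real r) (vol 4) {..<8}"
      using r(2) unfolding total_form by simp
    hence "Htot w a g1 g2 = complex_of_real r" by (simp add: fscale_def vol_eq)
    hence "Re (Htot w a g1 g2) \<ge> 0" using r(1) by simp
    moreover have "Re (Htot w a g1 g2) < 0" unfolding g1_def g2_def by (rule neg_case[OF a2 span])
    ultimately show False by simp
  qed
next
  assume a2: "cmod a \<le> 2"
  show "positive_form 4 2 (alpha_form w a)"
    unfolding positive_form_def
  proof (intro allI impI)
    fix gs :: "(nat \<Rightarrow> complex) list"
    assume "length gs = 4 - 2"
    hence "length gs = 2" by simp
    then obtain g1 g2 where gs: "gs = [g1, g2]"
      by (cases gs; cases "tl gs") auto
    let ?r = "(cmod (cc w g1 g2 1))^2 + (cmod (cc w g1 g2 2))^2 + (cmod (cc w g1 g2 3))^2 + (cmod (cc w g1 g2 4))^2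
    + (cmod (cc w g1 g2 5))^2 + (cmod (cc w g1 g2 6))^2 + 2 * Re (a * (cc w g1 g2 1 * cnj (cc w g1 g2 6)))"
    show "\<exists>r\<ge>0. wedge (alpha_form w a) (test_form 4 gs) = fscale (complex_of_real r) (vol 4)"
    proof (intro exI conjI)
      show "0 \<le> ?r" by (rule Htot_nonneg[OF a2])
      show "wedge (alpha_form w a) (test_form 4 gs) = fscale (complex_of_real ?r) (vol 4)"
        unfolding gs total_form Htot_real ..
    qed
  qed
qed


end
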